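(* Let $d\geq 2$ and let $\omega_{2d}=\{\mathbf x_1,\ldots,\mathbf x_{2d}\}$ be an antipodal configuration of $2d$ points on the unit sphere $S^{d-1}\subset\mathbb R^d$. Then $$\eta(\omega_{2d},S^{d-1}):=\min_{\mathbf x\in S^{d-1}}\max_{1\le i\le 2d}\mathbf x\cdot\mathbf x_i\leq \frac{1}{\sqrt d}.$$ Equality holds if and only if $\omega_{2d}$ is the set of vertices of a regular cross-polytope inscribed in $S^{d-1}$, i.e. $\omega_{2d}=\{\pm\mathbf a_1,\ldots,\pm\mathbf a_d\}$ for some orthonormal basis $\{\mathbf a_1,\ldots,\mathbf a_d\}$ of $\mathbb R^d$.
   Context: $S^{d-1}=\{\mathbf x\in\mathbb R^d:|\mathbf x|=1\}$. A configuration is a list of points (points may coincide). A configuration on $S^{d-1}$ is antipodal if together with a point $\mathbf x$ it contains $-\mathbf x$. *)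

theory Defs
  imports "HOL-Analysis.Analysis"
begin

text \<open>A configuration is a list of points (points may coincide).
  It lies on the unit sphere if all its points have norm 1; it is antipodal
  if together with a point x it contains -x.\<close>

definition on_sphere :: "('a::real_normed_vector) list \<Rightarrow> bool" where
  "on_sphere xs \<longleftrightarrow> (\<forall>x\<in>set xs. norm x = 1)"

definition antipodal :: "('a::real_normed_vector) list \<Rightarrow> bool" where
  "antipodal xs \<longleftrightarrow> (\<forall>x\<in>set xs. - x \<in> set xs)"

text \<open>Covering radius type quantity
  eta(omega, S) = min over x in S of max over i of x . x_i
  (the minimum exists by compactness; we use the infimum).\<close>

definition eta :: "('a::real_inner) list \<Rightarrow> 'a set \<Rightarrow> real" where
  "eta xs S = (INF x\<in>S. Max ((\<lambda>y. x \<bullet> y) ` set xs))"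

definition orthonormal_basis :: "('n::finite \<Rightarrow> real^'n) \<Rightarrow> bool" where
  "orthonormal_basis a \<longleftrightarrow> (\<forall>i j. a i \<bullet> a j = (if i = j then 1 else 0))"

end

theory Submission
  imports Defs
begin

lemma signs_exist:
  fixes b :: "'i \<Rightarrow> 'a::real_inner"
  assumes "finite I"
  shows "\<exists>e. (\<forall>i\<in>I. e i = 1 \<or> e i = -1) \<and> (\<Sum>i\<in>I. (norm (b i))\<^sup>2) \<le> (norm (\<Sum>i\<in>I. e i *\<^sub>R b i))\<^sup>2"
  using assms
proof (induction I rule: finite_induct)
  case empty
  then show ?case by auto
next
  case (insert j I)
  then obtain e where e: "\<forall>i\<in>I. e i = 1 \<or> e i = -1"
    "(\<Sum>i\<in>I. (norm (b i))\<^sup>2) \<le> (norm (\<Sum>i\<in>I. e i *\<^sub>R b i))\<^sup>2" by blast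
  define v where "v = (\<Sum>i\<in>I. e i *\<^sub>R b i)"
  define s :: real where "s = (if v \<bullet> b j \<ge> 0 then 1 else -1)"
  define e' where "e' = e(j := s)"
  have sv: "(\<Sum>i\<in>I. e' i *\<^sub>R b i) = v"
    unfolding v_def e'_def by (rule sum.cong) (use insert in auto)
  have sum': "(\<Sum>i\<in>insert j I. e' i *\<^sub>R b i) = s *\<^sub>R b j + v"
    using insert sv by (simp add: e'_def)
  have "(norm (s *\<^sub>R b j + v))\<^sup>2 = (norm v)\<^sup>2 + (norm (b j))\<^sup>2 + 2 * s * (v \<bullet> b j)"
    unfolding power2_norm_eq_inner
    by (simp add: inner_add_left inner_add_right inner_commute s_def algebra_simps)
  moreover have "s * (v \<bullet> b j) \<ge> 0" by (simp add: s_def)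
  ultimately have "(norm (s *\<^sub>R b j + v))\<^sup>2 \<ge> (norm v)\<^sup>2 + (norm (b j))\<^sup>2" by linarith
  moreover have "(\<Sum>i\<in>insert j I. (norm (b i))\<^sup>2) = (norm (b j))\<^sup>2 + (\<Sum>i\<in>I. (norm (b i))\<^sup>2)"
    using insert by simp
  ultimately have "(\<Sum>i\<in>insert j I. (norm (b i))\<^sup>2) \<le> (norm (\<Sum>i\<in>insert j I. e' i *\<^sub>R b i))\<^sup>2"
    using e(2) unfolding sum' v_def[symmetric] by linarith
  moreover have "\<forall>i\<in>insert j I. e' i = 1 \<or> e' i = -1" using e by (auto simp: e'_def s_def)
  ultimately show ?case by blast
qed

lemma split_antipodal:
  fixes S :: "'a::real_normed_vector set"
  assumes "finite S" "\<forall>s\<in>S. norm s = 1" "\<forall>s\<in>S. -s \<in> S"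
  obtains Y where "Y \<subseteq> S" "S = Y \<union> uminus ` Y" "card S = 2 * card Y"
proof -
  define P where "P = {Y. Y \<subseteq> S \<and> Y \<inter> uminus ` Y = {}}"
  have fP: "finite P" using assms(1) unfolding P_def by auto
  have "{} \<in> P" unfolding P_def by auto
  then have ne: "card ` P \<noteq> {}" by auto
  define m where "m = Max (card ` P)"
  have "m \<in> card ` P" unfolding m_def using fP ne by (intro Max_in) auto
  then obtain Y where Y: "Y \<in> P" "card Y = m" by auto
  have mx: "\<And>Z. Z \<in> P \<Longrightarrow> card Z \<le> m" unfolding m_def using fP by auto
  have YS: "Y \<subseteq> S" and dis: "Y \<inter> uminus ` Y = {}" using Y unfolding P_def by auto
  have fY: "finite Y" using YS assms(1) finite_subset by blast
  have eq: "S = Y \<union> uminus ` Y"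
  proof (rule ccontr)
    assume "S \<noteq> Y \<union> uminus ` Y"
    moreover have "Y \<union> uminus ` Y \<subseteq> S" using YS assms(3) by auto
    ultimately obtain s where s: "s \<in> S" "s \<notin> Y" "s \<notin> uminus ` Y" by blast
    have "s \<noteq> - s"
    proof
      assume "s = - s"
      then have "s + s = 0" by (metis add.right_inverse)
      then have "(2::real) *\<^sub>R s = 0" by (simp add: scaleR_2)
      then have "s = 0" by simp
      then show False using assms(2) s(1) by auto
    qed
    have "-s \<notin> Y" using s(3) by (metis add.inverse_inverse image_eqI)
    have "insert s Y \<in> P" unfolding P_def using s YS dis \<open>s \<noteq> - s\<close> \<open>-s \<notin> Y\<close>
      by (auto simp: image_iff)
    then have "card (insert s Y) \<le> m" by (rule mx)
    with fY s(2) Y(2) show False by simp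
  qed
  have "card (uminus ` Y) = card Y" by (simp add: card_image)
  then have "card S = 2 * card Y" using eq dis fY card_Un_disjoint[of Y "uminus ` Y"] by simp
  with YS eq that show ?thesis by blast
qed

lemma degenerate:
  fixes Y :: "'a::euclidean_space set"
  assumes "span Y \<noteq> UNIV"
  shows "\<exists>x. norm x = 1 \<and> (\<forall>y\<in>Y. x \<bullet> y = 0)"
proof -
  have "dim Y < DIM('a)"
    using assms dim_eq_full[of Y] dim_subset_UNIV[of Y] by (simp add: order_less_le)
  then obtain z where z: "z \<noteq> 0" "\<And>y. y \<in> span Y \<Longrightarrow> orthogonal z y"
    by (rule orthogonal_to_subspace_exists) blast
  have "\<forall>y\<in>Y. (z /\<^sub>R norm z) \<bullet> y = 0"
    using z(2) span_base by (fastforce simp: orthogonal_def)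
  moreover have "norm (z /\<^sub>R norm z) = 1" using z(1) by simp
  ultimately show ?thesis by blast
qed

lemma nondegenerate:
  fixes Y :: "'a::euclidean_space set"
  assumes fY: "finite Y" and sp: "span Y = UNIV" and cY: "card Y \<le> DIM('a)"
    and nY: "\<forall>y\<in>Y. norm y = 1"
  shows "\<exists>x c. norm x = 1 \<and> (\<forall>y\<in>Y. x \<bullet> y \<le> c \<and> x \<bullet> (-y) \<le> c) \<and> c \<le> 1 / sqrt DIM('a)
     \<and> (c = 1 / sqrt DIM('a) \<longrightarrow> card Y = DIM('a) \<and> (\<forall>y\<in>Y. \<forall>z\<in>Y. y \<bullet> z = (if y = z then 1 else 0)))"
proof -
  define d where "d = DIM('a)"
  have dY: "d \<le> card Y" unfolding d_def using dim_le_card[of UNIV Y] sp fY by simp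
  then have cYd: "card Y = d" using cY d_def by simp
  have dpos: "d > 0" unfolding d_def by simp
  have ex: "\<exists>b. b \<bullet> y = 1 \<and> (\<forall>y'\<in>Y - {y}. b \<bullet> y' = 0)" if yY: "y \<in> Y" for y
  proof -
    have "dim (Y - {y}) \<le> card (Y - {y})" by (rule dim_le_card[OF span_superset]) (use fY in simp)
    also have "\<dots> < d" using cYd yY fY dpos by (simp add: card_Diff_singleton)
    finally have "dim (Y - {y}) < DIM('a)" unfolding d_def .
    then obtain z where z: "z \<noteq> 0" "\<And>w. w \<in> span (Y - {y}) \<Longrightarrow> orthogonal z w"
      by (rule orthogonal_to_subspace_exists) blast
    have zY: "\<forall>y'\<in>Y - {y}. z \<bullet> y' = 0"
    proof
      fix y' assume "y' \<in> Y - {y}"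
      then have "y' \<in> span (Y - {y})" by (rule span_base)
      then show "z \<bullet> y' = 0" using z(2) by (simp add: orthogonal_def)
    qed
    have "z \<bullet> y \<noteq> 0"
    proof
      assume "z \<bullet> y = 0"
      then have "\<forall>w\<in>Y. orthogonal z w" using zY by (auto simp: orthogonal_def)
      then have "orthogonal z z" by (intro orthogonal_to_span[of z Y z]) (use sp in auto)
      then show False using z(1) by (simp add: orthogonal_def)
    qed
    then show ?thesis using zY by (intro exI[of _ "z /\<^sub>R (z \<bullet> y)"]) simp
  qed
  then have "\<forall>y\<in>Y. \<exists>b. b \<bullet> y = 1 \<and> (\<forall>y'\<in>Y - {y}. b \<bullet> y' = 0)" by blast
  then obtain b where bb: "\<forall>y\<in>Y. b y \<bullet> y = 1 \<and> (\<forall>y'\<in>Y - {y}. b y \<bullet> y' = 0)"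
    by (rule bchoice[elim_format]) blast
  have b1: "\<And>y. y \<in> Y \<Longrightarrow> b y \<bullet> y = 1" using bb by blast
  have b0: "\<And>y y'. y \<in> Y \<Longrightarrow> y' \<in> Y \<Longrightarrow> y' \<noteq> y \<Longrightarrow> b y \<bullet> y' = 0" using bb by blast
  have bn: "norm (b y) \<ge> 1" if "y \<in> Y" for y
    using norm_cauchy_schwarz[of "b y" y] b1[OF that] nY that by simp
  obtain e where e: "\<forall>i\<in>Y. e i = 1 \<or> e i = -1"
    and ew: "(\<Sum>i\<in>Y. (norm (b i))\<^sup>2) \<le> (norm (\<Sum>i\<in>Y. e i *\<^sub>R b i))\<^sup>2"
    using signs_exist[OF fY, of b] by blast
  define w where "w = (\<Sum>i\<in>Y. e i *\<^sub>R b i)"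
  have "(\<Sum>i\<in>Y. (1::real)) \<le> (\<Sum>i\<in>Y. (norm (b i))\<^sup>2)"
    using bn by (intro sum_mono) (simp add: one_le_power)
  then have sumd: "real d \<le> (\<Sum>i\<in>Y. (norm (b i))\<^sup>2)" using cYd by simp
  then have wd: "real d \<le> (norm w)\<^sup>2" using ew w_def by simp
  have "norm w \<noteq> 0"
  proof
    assume "norm w = 0"
    with wd dpos show False by simp
  qed
  then have w0: "norm w > 0" by simp
  have wy: "w \<bullet> y = e y" if "y \<in> Y" for y
  proof -
    have "w \<bullet> y = (\<Sum>i\<in>Y. e i * (b i \<bullet> y))" unfolding w_def by (simp add: inner_sum_left)
    also have "\<dots> = (\<Sum>i\<in>Y. if i = y then e i else 0)"
      using b0 b1 that by (intro sum.cong) auto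
    also have "\<dots> = e y" using fY that by simp
    finally show ?thesis .
  qed
  define x where "x = w /\<^sub>R norm w"
  define c where "c = 1 / norm w"
  have nx: "norm x = 1" using w0 by (simp add: x_def)
  have xy: "x \<bullet> y \<le> c \<and> x \<bullet> (-y) \<le> c" if "y \<in> Y" for y
  proof -
    have "x \<bullet> y = e y / norm w" "x \<bullet> (-y) = - e y / norm w" using wy[OF that] by (auto simp: x_def divide_inverse_commute)
    moreover have "e y \<le> 1" "- e y \<le> 1" using e that by auto
    moreover have "e y / norm w \<le> 1 / norm w" "- e y / norm w \<le> 1 / norm w"
      using divide_right_mono[OF \<open>e y \<le> 1\<close>, of "norm w"] divide_right_mono[OF \<open>- e y \<le> 1\<close>, of "norm w"]
      by auto
    ultimately show ?thesis unfolding c_def by simp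
  qed
  have sq: "sqrt (real d) \<le> norm w" using real_sqrt_le_mono[OF wd] by simp
  have "0 < sqrt (real d)" using dpos by simp
  then have cle: "c \<le> 1 / sqrt d" unfolding c_def using sq w0
    by (intro divide_left_mono) auto
  have eqc: "card Y = DIM('a) \<and> (\<forall>y\<in>Y. \<forall>z\<in>Y. y \<bullet> z = (if y = z then 1 else 0))"
    if ceq: "c = 1 / sqrt d"
  proof -
    have "norm w = sqrt d" using ceq w0 dpos by (simp add: c_def)
    then have "(norm w)\<^sup>2 = d" by simp
    then have "(\<Sum>i\<in>Y. (norm (b i))\<^sup>2 - 1) \<le> 0"
      using ew w_def cYd by (simp add: sum_subtractf)
    moreover have nn: "\<forall>i\<in>Y. (norm (b i))\<^sup>2 - 1 \<ge> 0" using bn by (simp add: one_le_power)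
    moreover have "(\<Sum>i\<in>Y. (norm (b i))\<^sup>2 - 1) \<ge> 0"
      using nn by (intro sum_nonneg) blast
    ultimately have "(\<Sum>i\<in>Y. (norm (b i))\<^sup>2 - 1) = 0"
      by linarith
    then have "\<forall>i\<in>Y. (norm (b i))\<^sup>2 - 1 = 0"
      using sum_nonneg_eq_0_iff[OF fY, of "\<lambda>i. (norm (b i))\<^sup>2 - 1"] nn by simp
    then have nb: "\<forall>i\<in>Y. b i \<bullet> b i = 1" by (simp add: power2_norm_eq_inner)
    have byy: "b y = y" if "y \<in> Y" for y
    proof -
      have "(b y - y) \<bullet> (b y - y) = b y \<bullet> b y - 2 * (b y \<bullet> y) + y \<bullet> y"
        by (simp add: inner_diff_left inner_diff_right inner_commute)
      moreover have "b y \<bullet> b y = 1" "b y \<bullet> y = 1" using nb b1 that by auto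
      moreover have "y \<bullet> y = 1" using nY that by (simp add: power2_norm_eq_inner[symmetric])
      ultimately have "(b y - y) \<bullet> (b y - y) = 0" by simp
      then show ?thesis by simp
    qed
    have "y \<bullet> z = (if y = z then 1 else 0)" if "y \<in> Y" "z \<in> Y" for y z
      using b0[OF that(1,2)] b1[OF that(1)] byy[OF that(1)] by auto
    then show ?thesis using cYd d_def by auto
  qed
  show ?thesis
    apply (rule exI[of _ x], rule exI[of _ c])
    using nx xy cle eqc unfolding d_def by simp
qed

lemma orth_lower:
  fixes a :: "'n::finite \<Rightarrow> real^'n" and x :: "real^'n"
  assumes ob: "orthonormal_basis a" and nx: "norm x = 1"
  shows "\<exists>i. 1 / sqrt (real CARD('n)) \<le> \<bar>x \<bullet> a i\<bar>"
proof (rule ccontr)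
  assume "\<not> ?thesis"
  then have lt: "\<And>i. \<bar>x \<bullet> a i\<bar> < 1 / sqrt (real CARD('n))" by (simp add: not_le)
  have aa: "\<And>i j. a i \<bullet> a j = (if i = j then 1 else 0)" using ob by (simp add: orthonormal_basis_def)
  have inj: "inj a"
  proof (rule injI)
    fix i j assume "a i = a j"
    then have "a i \<bullet> a j = 1" using aa[of i i] by simp
    then show "i = j" using aa[of i j] by (auto split: if_splits)
  qed
  define A where "A = range a"
  have cA: "card A = CARD('n)" unfolding A_def using inj by (simp add: card_image)
  have "pairwise orthogonal A"
    unfolding A_def pairwise_def orthogonal_def using aa by auto
  moreover have "0 \<notin> A" unfolding A_def using aa by (auto simp: image_iff) (metis inner_zero_left zero_neq_one)
  ultimately have "independent A" by (rule pairwise_orthogonal_independent)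
  then have spA: "UNIV \<subseteq> span A"
    using card_eq_dim[of A UNIV] cA unfolding A_def by simp
  define v where "v = x - (\<Sum>i\<in>UNIV. (x \<bullet> a i) *\<^sub>R a i)"
  have va: "v \<bullet> a j = 0" for j
  proof -
    have "(\<Sum>i\<in>UNIV. (x \<bullet> a i) *\<^sub>R a i) \<bullet> a j = (\<Sum>i\<in>UNIV. (x \<bullet> a i) * (a i \<bullet> a j))"
      by (simp add: inner_sum_left)
    also have "\<dots> = (\<Sum>i\<in>UNIV. if i = j then x \<bullet> a i else 0)"
      using aa by (intro sum.cong) auto
    also have "\<dots> = x \<bullet> a j" by simp
    finally show ?thesis unfolding v_def by (simp add: inner_diff_left)
  qed
  have "orthogonal v v"
    by (rule orthogonal_to_span[of v A v]) (use spA va in \<open>auto simp: A_def orthogonal_def\<close>)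
  then have "v = 0" by (simp add: orthogonal_def)
  then have xe: "x = (\<Sum>i\<in>UNIV. (x \<bullet> a i) *\<^sub>R a i)" unfolding v_def by simp
  have "1 = x \<bullet> x" using nx by (simp add: power2_norm_eq_inner[symmetric])
  also have "\<dots> = (\<Sum>i\<in>UNIV. (x \<bullet> a i) * (x \<bullet> a i))"
    by (subst (2) xe) (simp add: inner_sum_right)
  also have "\<dots> < (\<Sum>i\<in>(UNIV::'n set). 1 / real CARD('n))"
  proof (rule sum_strict_mono)
    fix i :: 'n
    have "\<bar>x \<bullet> a i\<bar>\<^sup>2 < (1 / sqrt (real CARD('n)))\<^sup>2"
      using lt[of i] by (intro power_strict_mono) auto
    then show "(x \<bullet> a i) * (x \<bullet> a i) < 1 / real CARD('n)"
      by (simp add: power2_eq_square power_divide)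
  qed auto
  also have "\<dots> = 1" by simp
  finally show False by simp
qed

theorem theorem2p2:
  fixes xs :: "(real^'n) list"
  assumes "CARD('n) \<ge> 2"
    and "length xs = 2 * CARD('n)"
    and "on_sphere xs"
    and "antipodal xs"
  shows "eta xs (sphere 0 1) \<le> 1 / sqrt (real CARD('n))
         \<and> (eta xs (sphere 0 1) = 1 / sqrt (real CARD('n)) \<longleftrightarrow>
            (\<exists>a. orthonormal_basis a \<and> set xs = range a \<union> uminus ` range a))"
proof -
  define S where "S = set xs"
  define d where "d = CARD('n)"
  define r where "r = 1 / sqrt (real d)"
  have D: "DIM(real^'n) = d" unfolding d_def by simp
  have dpos: "d > 0" unfolding d_def by simp
  have rpos: "r > 0" unfolding r_def using dpos by simp
  have fS: "finite S" unfolding S_def by simp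
  have nS: "\<forall>s\<in>S. norm s = 1" using assms(3) unfolding S_def on_sphere_def by blast
  have aS: "\<forall>s\<in>S. -s \<in> S" using assms(4) unfolding S_def antipodal_def by blast
  have cS: "card S \<le> 2 * d" unfolding S_def d_def using card_length[of xs] assms(2) by simp
  have neS: "S \<noteq> {}" unfolding S_def using assms(2) dpos d_def by auto
  define f where "f x = Max ((\<lambda>y. x \<bullet> y) ` S)" for x :: "real^'n"
  have eta_def': "eta xs (sphere 0 1) = (INF x\<in>sphere 0 1. f x)"
    unfolding eta_def f_def S_def by simp
  have fle: "f x \<le> c \<longleftrightarrow> (\<forall>s\<in>S. x \<bullet> s \<le> c)" for x c
    unfolding f_def using fS neS by (simp add: Max_le_iff)
  have fge: "c \<le> f x \<longleftrightarrow> (\<exists>s\<in>S. c \<le> x \<bullet> s)" for x c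
    unfolding f_def using fS neS by (simp add: Max_ge_iff)
  have fbd: "-1 \<le> f x" if "x \<in> sphere 0 1" for x
  proof -
    obtain s where s: "s \<in> S" using neS by blast
    have "\<bar>x \<bullet> s\<bar> \<le> norm x * norm s" by (rule Cauchy_Schwarz_ineq2)
    then have "-1 \<le> x \<bullet> s" using that s nS by auto
    then show ?thesis using fge s by blast
  qed
  have bdd: "bdd_below (f ` sphere 0 1)" using fbd by (intro bdd_belowI2) blast
  have etale: "eta xs (sphere 0 1) \<le> f x" if "x \<in> sphere 0 1" for x
    unfolding eta_def' using bdd that by (rule cINF_lower)
  have etage: "c \<le> eta xs (sphere 0 1)" if "\<And>x. x \<in> sphere 0 1 \<Longrightarrow> c \<le> f x" for c
    unfolding eta_def' using that by (intro cINF_greatest) auto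
  obtain Y where YS: "Y \<subseteq> S" and SY: "S = Y \<union> uminus ` Y" and cY2: "card S = 2 * card Y"
    using split_antipodal[OF fS nS aS] by blast
  have fY: "finite Y" using YS fS finite_subset by blast
  have nY: "\<forall>y\<in>Y. norm y = 1" using YS nS by blast
  have cY: "card Y \<le> DIM(real^'n)" using cY2 cS D by simp
  have P: "\<exists>x. norm x = 1 \<and> f x \<le> r \<and> (f x = r \<or> r \<le> f x \<longrightarrow>
        card Y = d \<and> (\<forall>y\<in>Y. \<forall>z\<in>Y. y \<bullet> z = (if y = z then 1 else 0)))"
  proof (cases "span Y = UNIV")
    case False
    then obtain x where x: "norm x = 1" "\<forall>y\<in>Y. x \<bullet> y = 0" using degenerate by blast
    have "f x \<le> 0" unfolding fle using x(2) SY by auto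
    then show ?thesis using x(1) rpos by (intro exI[of _ x]) auto
  next
    case True
    obtain x c where x: "norm x = 1" "\<forall>y\<in>Y. x \<bullet> y \<le> c \<and> x \<bullet> (-y) \<le> c"
      "c \<le> r" "c = r \<longrightarrow> card Y = d \<and> (\<forall>y\<in>Y. \<forall>z\<in>Y. y \<bullet> z = (if y = z then 1 else 0))"
      using nondegenerate[OF fY True cY nY] unfolding D r_def by blast
    have fc: "f x \<le> c" unfolding fle using x(2) SY by auto
    show ?thesis using x fc by (intro exI[of _ x]) auto
  qed
  then obtain x0 where x0: "norm x0 = 1" "f x0 \<le> r" "r \<le> f x0 \<longrightarrow>
        card Y = d \<and> (\<forall>y\<in>Y. \<forall>z\<in>Y. y \<bullet> z = (if y = z then 1 else 0))" by blast
  have P1: "eta xs (sphere 0 1) \<le> r" using etale[of x0] x0 by simp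
  have P2: "\<exists>a. orthonormal_basis a \<and> set xs = range a \<union> uminus ` range a"
    if "eta xs (sphere 0 1) = r"
  proof -
    have "r \<le> f x0" using etale[of x0] x0(1) that by simp
    then have Yo: "card Y = d" "\<forall>y\<in>Y. \<forall>z\<in>Y. y \<bullet> z = (if y = z then 1 else 0)" using x0(3) by auto
    have "card (UNIV::'n set) = card Y" using Yo(1) d_def by simp
    then obtain h where h: "bij_betw h (UNIV::'n set) Y" using finite_same_card_bij[of "UNIV::'n set" Y] fY by auto
    have rh: "range h = Y" using h by (simp add: bij_betw_def)
    have ih: "inj h" using h by (simp add: bij_betw_def)
    have "orthonormal_basis h" unfolding orthonormal_basis_def
    proof (intro allI)
      fix i j
      have "h i \<in> Y" "h j \<in> Y" using rh by auto
      moreover have "h i = h j \<longleftrightarrow> i = j" using ih by (auto dest: injD)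
      ultimately show "h i \<bullet> h j = (if i = j then 1 else 0)" using Yo(2) by auto
    qed
    moreover have "set xs = range h \<union> uminus ` range h" using SY rh S_def by simp
    ultimately show ?thesis by blast
  qed
  have P3: "eta xs (sphere 0 1) = r" if exa: "\<exists>a. orthonormal_basis a \<and> set xs = range a \<union> uminus ` range a"
  proof -
    obtain a where a: "orthonormal_basis a" "S = range a \<union> uminus ` range a" using exa S_def by blast
    have "r \<le> f x" if xs1: "x \<in> sphere 0 1" for x
    proof -
      obtain i where i: "r \<le> \<bar>x \<bullet> a i\<bar>" using orth_lower[OF a(1), of x] xs1 r_def d_def by auto
      have "a i \<in> S" "- a i \<in> S" using a(2) by auto
      moreover have "r \<le> x \<bullet> a i \<or> r \<le> x \<bullet> (- a i)" using i by (auto simp: abs_if split: if_splits)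
      ultimately show ?thesis unfolding fge by blast
    qed
    then have "r \<le> eta xs (sphere 0 1)" by (intro etage)
    then show ?thesis using P1 by simp
  qed
  show ?thesis using P1 P2 P3 unfolding r_def d_def by blast
qed

end
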